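(* Let $\sigma$ and $\tau$ be two $\mu$-rigid strategies on an arena $A$. If $\mathrm{GR}(\sigma)=\mathrm{GR}(\tau)$ then $\sigma=\tau$.
   Context: First-order variables are split into three disjoint countable sets: $\mathcal A$-, $\mathcal O$- and $\mathcal P$-variables. $\mathcal{AP}$-terms (resp. $\mathcal{OP}$-terms) are first-order terms built from $\mathcal A$- and $\mathcal P$-variables (resp. $\mathcal O$- and $\mathcal P$-variables). Arena: a finite forest whose nodes (moves) carry a first-order label (a list of $\mathcal A$-variables, all distinct across the arena) and an atomic label (a list of atomic formulas $X\,t_1\dots t_k$ with $\mathcal{AP}$-terms whose $\mathcal A$-variables occur in the first-order label of the node or an ancestor). Polarity is depth parity: even = Opponent (O), odd = Player (P); roots are initial. Justified sequence: finite sequence of move occurrences; each non-initial occurrence has a $\lambda$-pointer to an earlier occurrence of its father; each element of the atomic label of an occurrence has at most one $\mu$-pointer to an element of the atomic label of an earlier occurrence of opposite polarity. Instantiations: each O-move occurrence carries an $\mathcal O$-instantiation (list of $\mathcal O$-variables of the length of its first-order label), each P-move occurrence a $\mathcal P$-instantiation (list of $\mathcal{OP}$-terms of that length); all $\mathcal O$-variables in $\mathcal O$-instantiations distinct. For an occurrence $m$ with instantiation $[t_1..t_k]$ and first-order label $[x_1..x_k]$, $\theta_m=\{x_i\mapsto t_i\}$ if $m$ is initial, else $\theta_n\cup\{x_i\mapsto t_i\}$ with $n$ its $\lambda$-justifier. Play: instantiated justified sequence with alternating polarities, no $\mu$-pointers from O-moves, exactly one $\mu$-pointer from each element of the atomic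 label of each P-move, every $\mu$-pointer from $X\,t_1..t_k$ at $m$ to $Y\,u_1..u_p$ at $n$ satisfying $X=Y$, $k=p$, $t_i\theta_m=u_i\theta_n$, and every $\mathcal O$-variable in a $\mathcal P$-instantiation occurring in an earlier $\mathcal O$-instantiation. An $\mathcal O$-renaming is an injection $\varsigma$ of $\mathcal O$-variables into themselves; $s\varsigma$ replaces each $o$ by $\varsigma(o)$ in all instantiations. Strategy: non-empty set of even-length plays closed under even-length prefixes, deterministic ($sm,sn\in\sigma\Rightarrow sm=sn$, including pointers and instantiations) and uniform (closed under $\mathcal O$-renamings). A play is $\mu$-rigid if for every Player move occurrence: its atomic label has the same length as that of the immediately preceding move, each of its $\mu$-pointers goes to the corresponding element (same position) of the atomic label of the immediately preceding move, and its instantiation equals the instantiation of the immediately preceding move. A strategy is $\mu$-rigid if all its plays are. $\mathrm{GR}(s)$ erases all instantiations and $\mu$-pointers from a play $s$ (keeping moves and $\lambda$-pointers); $\mathrm{GR}(\sigma)=\{\mathrm{GR}(s)\mid s\in\sigma\}$. *)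

theory Defs
  imports Main
begin

datatype var = AV nat | OV nat | PV nat

datatype 'f trm = Var var | Fn 'f "'f trm list"

fun vars :: "'f trm \<Rightarrow> var set" where
  "vars (Var v) = {v}"
| "vars (Fn f ts) = (\<Union>t\<in>set ts. vars t)"

definition is_AV :: "var \<Rightarrow> bool" where "is_AV v = (\<exists>a. v = AV a)"
definition is_OV :: "var \<Rightarrow> bool" where "is_OV v = (\<exists>a. v = OV a)"

definition AP_term :: "'f trm \<Rightarrow> bool" where "AP_term t = (\<forall>v\<in>vars t. \<not> is_OV v)"
definition OP_term :: "'f trm \<Rightarrow> bool" where "OP_term t = (\<forall>v\<in>vars t. \<not> is_AV v)"

fun subst :: "(nat \<Rightarrow> 'f trm option) \<Rightarrow> 'f trm \<Rightarrow> 'f trm" where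
  "subst \<theta> (Var (AV a)) = (case \<theta> a of None \<Rightarrow> Var (AV a) | Some t \<Rightarrow> t)"
| "subst \<theta> (Var v) = Var v"
| "subst \<theta> (Fn f ts) = Fn f (map (subst \<theta>) ts)"

fun oren :: "(nat \<Rightarrow> nat) \<Rightarrow> 'f trm \<Rightarrow> 'f trm" where
  "oren \<rho> (Var (OV o')) = Var (OV (\<rho> o'))"
| "oren \<rho> (Var v) = Var v"
| "oren \<rho> (Fn f ts) = Fn f (map (oren \<rho>) ts)"

text \<open>An arena: a finite set of moves with a parent function (forest), a first-order
  label (list of A-variable indices) and an atomic label (list of atomic formulas
  X t1..tk, with predicate symbol of type 'p).\<close>

record ('m, 'f, 'p) arena =
  moves :: "'m set"
  par :: "'m \<Rightarrow> 'm option"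
  fol :: "'m \<Rightarrow> nat list"
  atl :: "'m \<Rightarrow> ('p \<times> 'f trm list) list"

inductive has_depth :: "('m \<Rightarrow> 'm option) \<Rightarrow> 'm \<Rightarrow> nat \<Rightarrow> bool" for pr where
  root: "pr m = None \<Longrightarrow> has_depth pr m 0"
| child: "pr m = Some p \<Longrightarrow> has_depth pr p n \<Longrightarrow> has_depth pr m (Suc n)"

definition is_O :: "('m, 'f, 'p) arena \<Rightarrow> 'm \<Rightarrow> bool" where
  "is_O A m = (\<exists>n. has_depth (par A) m n \<and> even n)"

definition is_P :: "('m, 'f, 'p) arena \<Rightarrow> 'm \<Rightarrow> bool" where
  "is_P A m = (\<exists>n. has_depth (par A) m n \<and> odd n)"

definition ancestor_eq :: "('m, 'f, 'p) arena \<Rightarrow> 'm \<Rightarrow> 'm \<Rightarrow> bool" where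
  "ancestor_eq A a m = (\<lambda>x y. par A y = Some x)\<^sup>*\<^sup>* a m"

definition wf_arena :: "('m, 'f, 'p) arena \<Rightarrow> bool" where
  "wf_arena A \<longleftrightarrow>
     finite (moves A)
   \<and> (\<forall>m\<in>moves A. \<forall>p. par A m = Some p \<longrightarrow> p \<in> moves A)
   \<and> (\<forall>m\<in>moves A. \<exists>n. has_depth (par A) m n)
   \<and> (\<forall>m\<in>moves A. distinct (fol A m))
   \<and> (\<forall>m\<in>moves A. \<forall>m'\<in>moves A. m \<noteq> m' \<longrightarrow> set (fol A m) \<inter> set (fol A m') = {})
   \<and> (\<forall>m\<in>moves A. \<forall>(X, ts)\<in>set (atl A m). \<forall>t\<in>set ts.
        AP_term t \<and> (\<forall>a. AV a \<in> vars t \<longrightarrow>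
          (\<exists>m'. ancestor_eq A m' m \<and> a \<in> set (fol A m'))))"

text \<open>A move occurrence: the move, its lambda-pointer (index of an earlier occurrence),
  one optional mu-pointer per element of the atomic label (index of an earlier
  occurrence, position in its atomic label) and its instantiation.\<close>

record ('m, 'f) occ =
  mv :: 'm
  jp :: "nat option"
  mp :: "(nat \<times> nat) option list"
  ins :: "'f trm list"

definition thetas :: "('m, 'f, 'p) arena \<Rightarrow> ('m, 'f) occ list \<Rightarrow> (nat \<Rightarrow> 'f trm option) list" where
  "thetas A s = foldl (\<lambda>acc x. acc @
      [(case jp x of None \<Rightarrow> Map.empty | Some j \<Rightarrow> acc ! j) ++ map_of (zip (fol A (mv x)) (ins x))])
     [] s"

definition justified_seq :: "('m, 'f, 'p) arena \<Rightarrow> ('m, 'f) occ list \<Rightarrow> bool" where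
  "justified_seq A s \<longleftrightarrow>
    (\<forall>i<length s.
       mv (s!i) \<in> moves A
     \<and> (case par A (mv (s!i)) of
          None \<Rightarrow> jp (s!i) = None
        | Some p \<Rightarrow> (\<exists>j<i. jp (s!i) = Some j \<and> mv (s!j) = p))
     \<and> length (mp (s!i)) = length (atl A (mv (s!i)))
     \<and> (\<forall>q<length (mp (s!i)). \<forall>j q'. mp (s!i) ! q = Some (j, q') \<longrightarrow>
          j < i \<and> q' < length (atl A (mv (s!j))) \<and> (is_O A (mv (s!i)) \<longleftrightarrow> is_P A (mv (s!j))))
     \<and> length (ins (s!i)) = length (fol A (mv (s!i)))
     \<and> (is_O A (mv (s!i)) \<longrightarrow> (\<forall>t\<in>set (ins (s!i)). \<exists>o'. t = Var (OV o')))
     \<and> (is_P A (mv (s!i)) \<longrightarrow> (\<forall>t\<in>set (ins (s!i)). OP_term t)))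
   \<and> distinct (concat (map ins (filter (\<lambda>x. is_O A (mv x)) s)))"

definition play :: "('m, 'f, 'p) arena \<Rightarrow> ('m, 'f) occ list \<Rightarrow> bool" where
  "play A s \<longleftrightarrow> justified_seq A s \<and>
    (\<forall>i. Suc i < length s \<longrightarrow> (is_O A (mv (s!i)) \<longleftrightarrow> is_P A (mv (s!Suc i))))
  \<and> (\<forall>i<length s. is_O A (mv (s!i)) \<longrightarrow> (\<forall>x\<in>set (mp (s!i)). x = None))
  \<and> (\<forall>i<length s. is_P A (mv (s!i)) \<longrightarrow> (\<forall>x\<in>set (mp (s!i)). x \<noteq> None))
  \<and> (\<forall>i<length s. \<forall>q<length (mp (s!i)). \<forall>j q'. mp (s!i) ! q = Some (j, q') \<longrightarrow>
       (let (X, ts) = atl A (mv (s!i)) ! q; (Y, us) = atl A (mv (s!j)) ! q' in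
          X = Y \<and> length ts = length us \<and>
          map (subst (thetas A s ! i)) ts = map (subst (thetas A s ! j)) us))
  \<and> (\<forall>i<length s. is_P A (mv (s!i)) \<longrightarrow>
       (\<forall>o'. (\<exists>t\<in>set (ins (s!i)). OV o' \<in> vars t) \<longrightarrow>
          (\<exists>j<i. is_O A (mv (s!j)) \<and> Var (OV o') \<in> set (ins (s!j)))))"

definition rename :: "(nat \<Rightarrow> nat) \<Rightarrow> ('m, 'f) occ list \<Rightarrow> ('m, 'f) occ list" where
  "rename \<rho> s = map (\<lambda>x. x\<lparr>ins := map (oren \<rho>) (ins x)\<rparr>) s"

definition strategy :: "('m, 'f, 'p) arena \<Rightarrow> ('m, 'f) occ list set \<Rightarrow> bool" where
  "strategy A \<sigma> \<longleftrightarrow>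
     \<sigma> \<noteq> {}
   \<and> (\<forall>s\<in>\<sigma>. play A s \<and> even (length s))
   \<and> (\<forall>s\<in>\<sigma>. \<forall>n. even n \<longrightarrow> take n s \<in> \<sigma>)
   \<and> (\<forall>s m n. s @ [m] \<in> \<sigma> \<longrightarrow> s @ [n] \<in> \<sigma> \<longrightarrow> m = n)
   \<and> (\<forall>s\<in>\<sigma>. \<forall>\<rho>. inj \<rho> \<longrightarrow> rename \<rho> s \<in> \<sigma>)"

definition mu_rigid_play :: "('m, 'f, 'p) arena \<Rightarrow> ('m, 'f) occ list \<Rightarrow> bool" where
  "mu_rigid_play A s \<longleftrightarrow>
    (\<forall>i<length s. is_P A (mv (s!i)) \<longrightarrow> 0 < i \<and>
        length (atl A (mv (s!i))) = length (atl A (mv (s!(i-1))))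
      \<and> (\<forall>q<length (mp (s!i)). mp (s!i) ! q = Some (i-1, q))
      \<and> ins (s!i) = ins (s!(i-1)))"

definition mu_rigid :: "('m, 'f, 'p) arena \<Rightarrow> ('m, 'f) occ list set \<Rightarrow> bool" where
  "mu_rigid A \<sigma> \<longleftrightarrow> (\<forall>s\<in>\<sigma>. mu_rigid_play A s)"

definition GR_play :: "('m, 'f) occ list \<Rightarrow> ('m \<times> nat option) list" where
  "GR_play s = map (\<lambda>x. (mv x, jp x)) s"

definition GR :: "('m, 'f) occ list set \<Rightarrow> ('m \<times> nat option) list set" where
  "GR \<sigma> = GR_play ` \<sigma>"

end

theory Submission
  imports Defs
begin

lemma has_depth_inv:
  assumes "has_depth pr m k"
  shows "(pr m = None \<and> k = 0) \<or> (\<exists>p k'. pr m = Some p \<and> has_depth pr p k' \<and> k = Suc k')"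
  using assms by (rule has_depth.cases) blast+

lemma has_depth_unique:
  "has_depth pr m n \<Longrightarrow> has_depth pr m k \<Longrightarrow> n = k"
proof (induction arbitrary: k rule: has_depth.induct)
  case (root m)
  show ?case using has_depth_inv[OF root(2)] root(1) by auto
next
  case (child m p n)
  from has_depth_inv[OF child(4)] child(1) obtain k' where "has_depth pr p k'" "k = Suc k'"
    by auto
  with child(3) show ?case by simp
qed

lemma O_not_P: assumes "is_O A m" "is_P A m" shows False
proof -
  obtain n where n: "has_depth (par A) m n" "even n" using assms(1) unfolding is_O_def by blast
  obtain k where k: "has_depth (par A) m k" "odd k" using assms(2) unfolding is_P_def by blast
  have "n = k" using has_depth_unique[OF n(1) k(1)] .
  with n(2) k(2) show False by simp
qed

lemma O_or_P: assumes "wf_arena A" "m \<in> moves A" shows "is_O A m \<or> is_P A m"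
proof -
  have "\<forall>m\<in>moves A. \<exists>n. has_depth (par A) m n" using assms(1) unfolding wf_arena_def by (elim conjE)
  then obtain n where "has_depth (par A) m n" using assms(2) by blast
  then show ?thesis unfolding is_O_def is_P_def by (cases "even n") blast+
qed

fun ovn :: "'f trm \<Rightarrow> nat" where
  "ovn (Var (OV n)) = n"
| "ovn _ = 0"

definition pairsOf :: "('m, 'f, 'p) arena \<Rightarrow> ('m, 'f) occ list \<Rightarrow> ('m, 'f) occ list \<Rightarrow> (nat \<times> nat) list" where
  "pairsOf A t s = concat (map2 (\<lambda>x y. if is_O A (mv x) then zip (map ovn (ins x)) (map ovn (ins y)) else []) t s)"

lemma pairsOf_fst:
  assumes "list_all2 (\<lambda>x y. mv x = mv y \<and> length (ins x) = length (ins y)) t s"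
  shows "map fst (pairsOf A t s) = concat (map (\<lambda>x. if is_O A (mv x) then map ovn (ins x) else []) t)"
  using assms unfolding pairsOf_def
  by (induction rule: list_all2_induct) auto

lemma pairsOf_snd:
  assumes "list_all2 (\<lambda>x y. mv x = mv y \<and> length (ins x) = length (ins y)) t s"
  shows "map snd (pairsOf A t s) = concat (map (\<lambda>x. if is_O A (mv x) then map ovn (ins x) else []) s)"
  using assms unfolding pairsOf_def
  by (induction rule: list_all2_induct) auto

lemma concat_ovn:
  "concat (map (\<lambda>x. if is_O A (mv x) then map ovn (ins x) else []) t) = map ovn (concat (map ins (filter (\<lambda>x. is_O A (mv x)) t)))"
  by (induction t) auto

lemma js_at:
  assumes "justified_seq A s" "i < length s"
  shows "mv (s!i) \<in> moves A" "length (mp (s!i)) = length (atl A (mv (s!i)))"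
    "length (ins (s!i)) = length (fol A (mv (s!i)))"
    "is_O A (mv (s!i)) \<Longrightarrow> u \<in> set (ins (s!i)) \<Longrightarrow> \<exists>o'. u = Var (OV o')"
proof -
  have H0: "\<forall>i<length s.
       mv (s!i) \<in> moves A
     \<and> (case par A (mv (s!i)) of
          None \<Rightarrow> jp (s!i) = None
        | Some p \<Rightarrow> (\<exists>j<i. jp (s!i) = Some j \<and> mv (s!j) = p))
     \<and> length (mp (s!i)) = length (atl A (mv (s!i)))
     \<and> (\<forall>q<length (mp (s!i)). \<forall>j q'. mp (s!i) ! q = Some (j, q') \<longrightarrow>
          j < i \<and> q' < length (atl A (mv (s!j))) \<and> (is_O A (mv (s!i)) \<longleftrightarrow> is_P A (mv (s!j))))
     \<and> length (ins (s!i)) = length (fol A (mv (s!i)))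
     \<and> (is_O A (mv (s!i)) \<longrightarrow> (\<forall>t\<in>set (ins (s!i)). \<exists>o'. t = Var (OV o')))
     \<and> (is_P A (mv (s!i)) \<longrightarrow> (\<forall>t\<in>set (ins (s!i)). OP_term t))"
    using assms(1) unfolding justified_seq_def by (rule conjunct1)
  note H = H0[rule_format, OF assms(2)]
  show "mv (s!i) \<in> moves A" using H by (elim conjE)
  show "length (mp (s!i)) = length (atl A (mv (s!i)))" using H by (elim conjE)
  show "length (ins (s!i)) = length (fol A (mv (s!i)))" using H by (elim conjE)
  have HO: "is_O A (mv (s!i)) \<longrightarrow> (\<forall>t\<in>set (ins (s!i)). \<exists>o'. t = Var (OV o'))"
    using H by (elim conjE)
  show "is_O A (mv (s!i)) \<Longrightarrow> u \<in> set (ins (s!i)) \<Longrightarrow> \<exists>o'. u = Var (OV o')"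
    using HO by blast
qed

lemma play_at:
  assumes "play A s" "i < length s"
  shows "is_O A (mv (s!i)) \<Longrightarrow> x \<in> set (mp (s!i)) \<Longrightarrow> x = None"
    "Suc i < length s \<Longrightarrow> is_O A (mv (s!i)) \<longleftrightarrow> is_P A (mv (s!Suc i))"
proof -
  have H1: "\<forall>i. Suc i < length s \<longrightarrow> (is_O A (mv (s!i)) \<longleftrightarrow> is_P A (mv (s!Suc i)))"
    using assms(1) unfolding play_def by (elim conjE)
  have H2: "\<forall>i<length s. is_O A (mv (s!i)) \<longrightarrow> (\<forall>x\<in>set (mp (s!i)). x = None)"
    using assms(1) unfolding play_def by (elim conjE)
  show "is_O A (mv (s!i)) \<Longrightarrow> x \<in> set (mp (s!i)) \<Longrightarrow> x = None" using H2 assms(2) by blast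
  show "Suc i < length s \<Longrightarrow> is_O A (mv (s!i)) \<longleftrightarrow> is_P A (mv (s!Suc i))" using H1 by blast
qed

lemma distinct_ovn:
  assumes "justified_seq A t"
  shows "distinct (concat (map (\<lambda>x. if is_O A (mv x) then map ovn (ins x) else []) t))"
proof -
  let ?L = "concat (map ins (filter (\<lambda>x. is_O A (mv x)) t))"
  have d: "distinct ?L" using assms unfolding justified_seq_def by (rule conjunct2)
  have el: "\<forall>u\<in>set ?L. \<exists>o'. u = Var (OV o')"
  proof
    fix u assume "u \<in> set ?L"
    then obtain x where x: "x \<in> set t" "is_O A (mv x)" "u \<in> set (ins x)" by auto
    then obtain i where i: "i < length t" "t ! i = x" by (auto simp: in_set_conv_nth)
    with assms x show "\<exists>o'. u = Var (OV o')" using js_at(4)[OF assms i(1), of u] by simp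
  qed
  have "inj_on ovn (set ?L)"
  proof (rule inj_onI)
    fix a b assume "a \<in> set ?L" "b \<in> set ?L" "ovn a = ovn b"
    with el show "a = b" by (metis ovn.simps(1))
  qed
  with d have "distinct (map ovn ?L)" by (simp add: distinct_map)
  then show ?thesis by (simp add: concat_ovn)
qed

lemma pair_in:
  assumes "i < length t" "length s = length t" "is_O A (mv (t ! i))"
  shows "set (zip (map ovn (ins (t!i))) (map ovn (ins (s!i)))) \<subseteq> set (pairsOf A t s)"
proof -
  have mem: "(t!i, s!i) \<in> set (zip t s)"
  proof -
    have "zip t s ! i = (t!i, s!i)" using assms by simp
    moreover have "i < length (zip t s)" using assms by simp
    ultimately show ?thesis by (metis nth_mem)
  qed
  have E: "(\<lambda>(x, y). if is_O A (mv x) then zip (map ovn (ins x)) (map ovn (ins y)) else []) (t!i, s!i)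
      = zip (map ovn (ins (t!i))) (map ovn (ins (s!i)))" using assms(3) by simp
  have X: "zip (map ovn (ins (t!i))) (map ovn (ins (s!i)))
     \<in> set (map2 (\<lambda>x y. if is_O A (mv x) then zip (map ovn (ins x)) (map ovn (ins y)) else []) t s)"
    unfolding set_map by (rule rev_image_eqI[OF mem]) (rule E[symmetric])
  show ?thesis unfolding pairsOf_def set_concat by (rule Union_upper[OF imageI[OF X]])
qed

lemma mr_at:
  assumes "mu_rigid_play A s" "i < length s" "is_P A (mv (s!i))"
  shows "0 < i" "\<And>q. q < length (mp (s!i)) \<Longrightarrow> mp (s!i) ! q = Some (i-1, q)"
    "ins (s!i) = ins (s!(i-1))"
proof -
  have "\<forall>i<length s. is_P A (mv (s!i)) \<longrightarrow> 0 < i \<and>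
        length (atl A (mv (s!i))) = length (atl A (mv (s!(i-1))))
      \<and> (\<forall>q<length (mp (s!i)). mp (s!i) ! q = Some (i-1, q))
      \<and> ins (s!i) = ins (s!(i-1))" using assms(1) unfolding mu_rigid_play_def .
  then have H: "0 < i \<and>
        length (atl A (mv (s!i))) = length (atl A (mv (s!(i-1))))
      \<and> (\<forall>q<length (mp (s!i)). mp (s!i) ! q = Some (i-1, q))
      \<and> ins (s!i) = ins (s!(i-1))" using assms(2,3) by simp
  then show "0 < i" "ins (s!i) = ins (s!(i-1))" by simp_all
  fix q assume "q < length (mp (s!i))" then show "mp (s!i) ! q = Some (i-1, q)" using H by simp
qed

lemma strat_play: "strategy A \<sigma> \<Longrightarrow> s \<in> \<sigma> \<Longrightarrow> play A s"
  unfolding strategy_def by (elim conjE) simp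

lemma strat_ren: "strategy A \<sigma> \<Longrightarrow> s \<in> \<sigma> \<Longrightarrow> inj \<rho> \<Longrightarrow> rename \<rho> s \<in> \<sigma>"
  unfolding strategy_def by (elim conjE) simp

lemma match:
  assumes wf: "wf_arena A" and ps: "play A s" and pt: "play A t"
    and rs: "mu_rigid_play A s" and rt: "mu_rigid_play A t"
    and gr: "GR_play t = GR_play s"
  shows "\<exists>\<rho>. inj \<rho> \<and> rename \<rho> t = s"
proof -
  have "length (GR_play t) = length (GR_play s)" using gr by simp
  then have len: "length t = length s" unfolding GR_play_def by simp
  have mvj: "mv (t!i) = mv (s!i) \<and> jp (t!i) = jp (s!i)" if "i < length s" for i
  proof -
    have "GR_play t ! i = GR_play s ! i" using gr by simp
    then show ?thesis using that len unfolding GR_play_def by simp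
  qed
  have js: "justified_seq A s" using ps unfolding play_def by (rule conjunct1)
  have jt: "justified_seq A t" using pt unfolding play_def by (rule conjunct1)
  have insl: "length (ins (t!i)) = length (ins (s!i))" if "i < length s" for i
    using js_at(3)[OF js that] js_at(3)[OF jt] that len mvj[OF that] by simp
  have la2: "list_all2 (\<lambda>x y. mv x = mv y \<and> length (ins x) = length (ins y)) t s"
    using len mvj insl by (simp add: list_all2_conv_all_nth)
  define P where "P = pairsOf A t s"
  have dfst: "distinct (map fst P)" unfolding P_def pairsOf_fst[OF la2] using distinct_ovn[OF jt] .
  have dsnd: "distinct (map snd P)" unfolding P_def pairsOf_snd[OF la2] using distinct_ovn[OF js] .
  define M where "M = Max (insert 0 (snd ` set P))"
  define \<rho> where "\<rho> x = (case map_of P x of Some y \<Rightarrow> y | None \<Rightarrow> x + Suc M)" for x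
  have Mge: "y \<le> M" if "y \<in> snd ` set P" for y
    unfolding M_def using that by (simp add: Max_ge_iff)
  have injs: "inj_on snd (set P)" using dsnd by (simp add: distinct_map)
  have inj: "inj \<rho>"
  proof (rule injI)
    fix a b assume eq: "\<rho> a = \<rho> b"
    show "a = b"
    proof (cases "map_of P a")
      case None note Na = None
      show ?thesis
      proof (cases "map_of P b")
        case None with Na eq show ?thesis by (simp add: \<rho>_def)
      next
        case (Some y)
        then have "(b, y) \<in> set P" by (rule map_of_SomeD)
        then have "y \<le> M" using Mge by force
        with Na Some eq show ?thesis by (simp add: \<rho>_def)
      qed
    next
      case (Some y) note Sa = Some
      then have ay: "(a, y) \<in> set P" by (rule map_of_SomeD)
      show ?thesis
      proof (cases "map_of P b")
        case None
        have "y \<le> M" using Mge ay by force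
        with None Sa eq show ?thesis by (simp add: \<rho>_def)
      next
        case (Some z)
        then have bz: "(b, z) \<in> set P" by (rule map_of_SomeD)
        from Sa Some eq have "y = z" by (simp add: \<rho>_def)
        with ay bz injs have "(a, y) = (b, z)" by (metis inj_onD snd_conv)
        then show ?thesis by simp
      qed
    qed
  qed
  have keyO: "map (oren \<rho>) (ins (t!i)) = ins (s!i)" if i: "i < length s" "is_O A (mv (t!i))" for i
  proof (rule nth_equalityI)
    show "length (map (oren \<rho>) (ins (t ! i))) = length (ins (s ! i))" using insl[OF i(1)] by simp
    fix j assume j: "j < length (map (oren \<rho>) (ins (t ! i)))"
    have jl: "j < length (ins (t!i))" "j < length (ins (s!i))" using j insl[OF i(1)] by simp_all
    have Os: "is_O A (mv (s!i))" using i(2) mvj[OF i(1)] by simp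
    obtain a where a: "ins (t!i) ! j = Var (OV a)"
      using js_at(4)[OF jt, of i "ins (t!i) ! j"] i len jl by auto
    obtain b where b: "ins (s!i) ! j = Var (OV b)"
      using js_at(4)[OF js, of i "ins (s!i) ! j"] i Os jl by auto
    have "zip (map ovn (ins (t!i))) (map ovn (ins (s!i))) ! j = (a, b)"
      using jl a b by simp
    moreover have "j < length (zip (map ovn (ins (t!i))) (map ovn (ins (s!i))))" using jl by simp
    ultimately have ab: "(a, b) \<in> set (zip (map ovn (ins (t!i))) (map ovn (ins (s!i))))"
      by (metis nth_mem)
    have it: "i < length t" using i(1) len by simp
    have "set (zip (map ovn (ins (t!i))) (map ovn (ins (s!i)))) \<subseteq> set P"
      unfolding P_def by (rule pair_in[OF it len[symmetric] i(2)])
    with ab have "(a, b) \<in> set P" by (rule rev_subsetD)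
    then have "map_of P a = Some b" using dfst by (rule map_of_is_SomeI[rotated])
    then have "\<rho> a = b" by (simp add: \<rho>_def)
    then show "map (oren \<rho>) (ins (t ! i)) ! j = ins (s ! i) ! j" using a b jl by simp
  qed
  have "rename \<rho> t = s"
  proof (rule nth_equalityI)
    show "length (rename \<rho> t) = length s" using len by (simp add: rename_def)
    fix i assume "i < length (rename \<rho> t)"
    then have i: "i < length s" using len by (simp add: rename_def)
    have mvi: "mv (s!i) \<in> moves A" using js_at(1)[OF js i] .
    have mpl: "length (mp (t!i)) = length (mp (s!i))"
      using js_at(2)[OF js i] js_at(2)[OF jt, of i] i len mvj[OF i] by simp
    have "mp (t!i) = mp (s!i) \<and> ins (rename \<rho> t ! i) = ins (s!i)"
    proof (cases "is_O A (mv (s!i))")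
      case True
      then have Ot: "is_O A (mv (t!i))" using mvj[OF i] by simp
      have "mp (t!i) = mp (s!i)"
      proof (rule nth_equalityI)
        show "length (mp (t!i)) = length (mp (s!i))" by (rule mpl)
        fix q assume q: "q < length (mp (t!i))"
        have "mp (t!i) ! q = None" using play_at(1)[OF pt, of i] Ot i len q by auto
        moreover have "mp (s!i) ! q = None" using play_at(1)[OF ps i] True mpl q by auto
        ultimately show "mp (t!i) ! q = mp (s!i) ! q" by simp
      qed
      moreover have "ins (rename \<rho> t ! i) = ins (s!i)"
        using keyO[OF i Ot] i len by (simp add: rename_def)
      ultimately show ?thesis by simp
    next
      case False
      then have Ps: "is_P A (mv (s!i))" using O_or_P[OF wf mvi] by simp
      then have Pt: "is_P A (mv (t!i))" using mvj[OF i] by simp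
      have i0: "0 < i" using mr_at(1)[OF rs i Ps] .
      have "mp (t!i) = mp (s!i)"
      proof (rule nth_equalityI)
        show "length (mp (t!i)) = length (mp (s!i))" by (rule mpl)
        fix q assume q: "q < length (mp (t!i))"
        have "mp (t!i) ! q = Some (i-1, q)" using mr_at(2)[OF rt _ Pt, of q] i len q by simp
        moreover have "mp (s!i) ! q = Some (i-1, q)" using mr_at(2)[OF rs i Ps, of q] mpl q by simp
        ultimately show "mp (t!i) ! q = mp (s!i) ! q" by simp
      qed
      moreover have "ins (t!i) = ins (t!(i-1))" using mr_at(3)[OF rt _ Pt] i len by simp
      moreover have "ins (s!i) = ins (s!(i-1))" using mr_at(3)[OF rs i Ps] .
      moreover have "is_O A (mv (t!(i-1)))"
      proof -
        have "Suc (i-1) < length t" using i i0 len by simp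
        then have "is_O A (mv (t!(i-1))) \<longleftrightarrow> is_P A (mv (t!Suc (i-1)))" using play_at(2)[OF pt] by simp
        then show ?thesis using Pt i0 by simp
      qed
      moreover note keyO[of "i-1"]
      ultimately show ?thesis using i i0 len by (simp add: rename_def)
    qed
    then show "rename \<rho> t ! i = s ! i"
      using mvj[OF i] i len by (simp add: rename_def occ.equality)
  qed
  with inj show ?thesis by blast
qed

theorem mainTheorem10:
  fixes A :: "('m, 'f, 'p) arena" and \<sigma> \<tau> :: "('m, 'f) occ list set"
  assumes "wf_arena A"
    and "strategy A \<sigma>" and "strategy A \<tau>"
    and "mu_rigid A \<sigma>" and "mu_rigid A \<tau>"
    and "GR \<sigma> = GR \<tau>"
  shows "\<sigma> = \<tau>"
proof -
  have sub: "\<sigma>1 \<subseteq> \<sigma>2" if s1: "strategy A \<sigma>1" and s2: "strategy A \<sigma>2"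
    and r1: "mu_rigid A \<sigma>1" and r2: "mu_rigid A \<sigma>2" and g: "GR \<sigma>1 = GR \<sigma>2"
    for \<sigma>1 \<sigma>2 :: "('m, 'f) occ list set"
  proof
    fix s assume s: "s \<in> \<sigma>1"
    then have "GR_play s \<in> GR \<sigma>2" using g unfolding GR_def by blast
    then obtain t where t: "t \<in> \<sigma>2" "GR_play t = GR_play s" unfolding GR_def by auto
    have "play A s" using strat_play[OF s1 s] .
    moreover have "play A t" using strat_play[OF s2 t(1)] .
    moreover have "mu_rigid_play A s" using r1 s unfolding mu_rigid_def by blast
    moreover have "mu_rigid_play A t" using r2 t(1) unfolding mu_rigid_def by blast
    ultimately obtain \<rho> where "inj \<rho>" "rename \<rho> t = s"
      using match[OF assms(1)] t(2) by blast
    then show "s \<in> \<sigma>2" using strat_ren[OF s2 t(1)] by metis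
  qed
  show ?thesis using sub[OF assms(2-6)] sub[OF assms(3,2,5,4) assms(6)[symmetric]] by blast
qed

end
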